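(* Let $P$ be a finite poset and $R$ a consistent restriction function on $P$ such that each $R(p)$ is a nonempty interval of integers. Then on the set $\{(p,k):p\in P,\ k\in R(p)^*\}$, the defining relation $\lessdot$ of $\Gamma(P,R)$ holds between $(p_1,k_1)$ and $(p_2,k_2)$ if and only if either (1) $p_1=p_2$ and $k_1=k_2+1$, or (2) $p_1\lessdot p_2$ in $P$ and $k_1+1=k_2$. In particular, $\Gamma(P,R)$ is the poset on this set whose covering relations are exactly those given by (1) and (2).
   Context: A restriction function assigns to each $p\in P$ a nonempty finite $R(p)\subseteq\mathbb{Z}$; $R$ is consistent if for every cover $x\lessdot y$ in $P$, $\min R(x)<\min R(y)$ and $\max R(x)<\max R(y)$. $R(p)^*=R(p)\setminus\{\max R(p)\}$; $R(p)_{>k}$ (resp. $R(p)_{<k}$) is the smallest (resp. largest) element of $R(p)$ greater (resp. less) than $k$. $\Gamma(P,R)$ is the poset on $\{(p,k):p\in P,k\in R(p)^*\}$ whose order is the reflexive–transitive closure of the relation $(p_1,k_1)\lessdot(p_2,k_2)$ (its covering relations), which holds iff either (i) $p_1=p_2$ and $R(p_1)_{>k_2}=k_1$; or (ii) $p_1\lessdot p_2$ in $P$, $k_1=R(p_1)_{<k_2}$, $k_1\ne\max R(p_1)$, and there is no $k\in R(p_2)$ with $k>k_2$ and $R(p_1)_{<k}=k_1$. *)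

theory Defs
  imports Main
begin

text \<open>A finite poset is modelled as a finite carrier set P inside a type with a partial order;
  the order on P is the induced one.\<close>

definition covers_in :: "'a::order set \<Rightarrow> 'a \<Rightarrow> 'a \<Rightarrow> bool" where
  "covers_in P x y \<longleftrightarrow> x \<in> P \<and> y \<in> P \<and> x < y \<and> \<not> (\<exists>z\<in>P. x < z \<and> z < y)"

definition restriction_fun :: "'a set \<Rightarrow> ('a \<Rightarrow> int set) \<Rightarrow> bool" where
  "restriction_fun P R \<longleftrightarrow> (\<forall>p\<in>P. finite (R p) \<and> R p \<noteq> {})"

definition consistent :: "'a::order set \<Rightarrow> ('a \<Rightarrow> int set) \<Rightarrow> bool" where
  "consistent P R \<longleftrightarrow> (\<forall>x y. covers_in P x y \<longrightarrow>
      Min (R x) < Min (R y) \<and> Max (R x) < Max (R y))"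

definition Rstar :: "int set \<Rightarrow> int set" where
  "Rstar S = S - {Max S}"

definition above :: "int set \<Rightarrow> int \<Rightarrow> int option" where
  "above S k = (if \<exists>x\<in>S. x > k then Some (Min {x\<in>S. x > k}) else None)"

definition below :: "int set \<Rightarrow> int \<Rightarrow> int option" where
  "below S k = (if \<exists>x\<in>S. x < k then Some (Max {x\<in>S. x < k}) else None)"

definition Gamma_set :: "'a set \<Rightarrow> ('a \<Rightarrow> int set) \<Rightarrow> ('a \<times> int) set" where
  "Gamma_set P R = {(p, k). p \<in> P \<and> k \<in> Rstar (R p)}"

definition Gamma_cov :: "'a::order set \<Rightarrow> ('a \<Rightarrow> int set) \<Rightarrow> 'a \<times> int \<Rightarrow> 'a \<times> int \<Rightarrow> bool" where
  "Gamma_cov P R a b \<longleftrightarrow> a \<in> Gamma_set P R \<and> b \<in> Gamma_set P R \<and>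
     (let (p1, k1) = a; (p2, k2) = b in
       (p1 = p2 \<and> above (R p1) k2 = Some k1) \<or>
       (covers_in P p1 p2 \<and> below (R p1) k2 = Some k1 \<and> k1 \<noteq> Max (R p1) \<and>
        \<not> (\<exists>k\<in>R p2. k > k2 \<and> below (R p1) k = Some k1)))"

definition Gamma_le :: "'a::order set \<Rightarrow> ('a \<Rightarrow> int set) \<Rightarrow> 'a \<times> int \<Rightarrow> 'a \<times> int \<Rightarrow> bool" where
  "Gamma_le P R = (Gamma_cov P R)\<^sup>*\<^sup>*"

end

theory Submission
  imports Defs
begin
lemma above_iv: "(k::int) < b \<Longrightarrow> a \<le> b \<Longrightarrow> above {a..b} k = Some (max (k+1) a)"
proof -
  assume h: "k < b" "a \<le> b"
  have e: "{x\<in>{a..b}. x > k} = {max (k+1) a..b}" by auto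
  have "Min {max (k+1) a..b} = max (k+1) a" using h by (intro Min_eqI) auto
  thus ?thesis unfolding above_def using h e by auto
qed
lemma below_iv: "a < (k::int) \<Longrightarrow> a \<le> b \<Longrightarrow> below {a..b} k = Some (min (k - 1) b)"
proof -
  assume h: "a < k" "a \<le> b"
  have e: "{x\<in>{a..b}. x < k} = {a..min (k - 1) b}" by auto
  have "Max {a..min (k - 1) b} = min (k - 1) b" using h by (intro Max_eqI) auto
  thus ?thesis unfolding below_def using h e by auto
qed
lemma Rstar_iv: "(a::int) \<le> b \<Longrightarrow> Rstar {a..b} = {a..<b}"
  unfolding Rstar_def by (subst Max_eqI[of _ b]) auto

theorem theorem2p21:
  fixes P :: "'a::order set" and R :: "'a \<Rightarrow> int set"
  assumes "finite P"
    and "restriction_fun P R"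
    and "consistent P R"
    and "\<forall>p\<in>P. \<exists>a b. a \<le> b \<and> R p = {a..b}"
  shows "\<forall>p1 k1 p2 k2. (p1, k1) \<in> Gamma_set P R \<longrightarrow> (p2, k2) \<in> Gamma_set P R \<longrightarrow>
           (Gamma_cov P R (p1, k1) (p2, k2) \<longleftrightarrow>
              ((p1 = p2 \<and> k1 = k2 + 1) \<or> (covers_in P p1 p2 \<and> k1 + 1 = k2)))"
proof (intro allI impI)
  fix p1 k1 p2 k2
  assume g1: "(p1, k1) \<in> Gamma_set P R" and g2: "(p2, k2) \<in> Gamma_set P R"
  from g1 have p1: "p1 \<in> P" "k1 \<in> Rstar (R p1)" unfolding Gamma_set_def by auto
  from g2 have p2: "p2 \<in> P" "k2 \<in> Rstar (R p2)" unfolding Gamma_set_def by auto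
  obtain a1 b1 where r1: "a1 \<le> b1" "R p1 = {a1..b1}" using assms(4) p1 by blast
  obtain a2 b2 where r2: "a2 \<le> b2" "R p2 = {a2..b2}" using assms(4) p2 by blast
  have k1: "a1 \<le> k1" "k1 < b1" using p1(2) r1 Rstar_iv by auto
  have k2: "a2 \<le> k2" "k2 < b2" using p2(2) r2 Rstar_iv by auto
  have mx1: "Max (R p1) = b1" using r1 by (auto intro: Max_eqI)
  have cov: "a1 < a2 \<and> b1 < b2" if "covers_in P p1 p2"
  proof -
    have "Min (R p1) = a1" "Min (R p2) = a2" "Max (R p2) = b2"
      using r1 r2 by (auto intro: Min_eqI Max_eqI)
    thus ?thesis using that assms(3) mx1 unfolding consistent_def by auto
  qed
  show "Gamma_cov P R (p1, k1) (p2, k2) \<longleftrightarrow>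
              ((p1 = p2 \<and> k1 = k2 + 1) \<or> (covers_in P p1 p2 \<and> k1 + 1 = k2))"
  proof (cases "p1 = p2")
    case True
    then have nc: "\<not> covers_in P p1 p2" unfolding covers_in_def by auto
    have "above (R p1) k2 = Some (max (k2+1) a1)" using True r1 r2 k2 above_iv by auto
    moreover have "max (k2+1) a1 = k2 + 1" using True r1 r2 k2 by auto
    ultimately show ?thesis using g1 g2 nc True unfolding Gamma_cov_def by auto
  next
    case False
    show ?thesis
    proof (cases "covers_in P p1 p2")
      case False2: False
      thus ?thesis using False unfolding Gamma_cov_def by auto
    next
      case True
      from cov[OF True] have ab: "a1 < a2" "b1 < b2" by auto
      have bl: "\<And>k. k \<ge> k2 \<Longrightarrow> below (R p1) k = Some (min (k - 1) b1)"
        using r1 below_iv ab k2 by auto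
      show ?thesis
      proof
        assume "Gamma_cov P R (p1, k1) (p2, k2)"
        hence "below (R p1) k2 = Some k1" "k1 \<noteq> Max (R p1)" using False unfolding Gamma_cov_def by auto
        hence "k1 = k2 - 1" using bl[of k2] mx1 by (auto simp: min_def split: if_splits)
        thus "(p1 = p2 \<and> k1 = k2 + 1) \<or> (covers_in P p1 p2 \<and> k1 + 1 = k2)" using True by auto
      next
        assume "(p1 = p2 \<and> k1 = k2 + 1) \<or> (covers_in P p1 p2 \<and> k1 + 1 = k2)"
        hence e: "k1 = k2 - 1" using False by auto
        have "below (R p1) k2 = Some k1" using bl[of k2] e k1 by auto
        moreover have "\<not> (\<exists>k\<in>R p2. k > k2 \<and> below (R p1) k = Some k1)"
        proof
          assume "\<exists>k\<in>R p2. k > k2 \<and> below (R p1) k = Some k1"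
          then obtain k where "k > k2" "below (R p1) k = Some k1" by auto
          with bl[of k] e k1 show False by auto
        qed
        ultimately show "Gamma_cov P R (p1, k1) (p2, k2)"
          using g1 g2 True e mx1 k1 unfolding Gamma_cov_def by auto
      qed
    qed
  qed
qed

end
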